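(* Let $f\in K\{X\}_\infty$ be homogeneous of degree $n$. Then $f$ is primitive if and only if $\partial_T(f)=0$ for all monomials $T$ with $1\le\deg T<\frac{n+1}{2}$.
   Context: $K$ is a field of characteristic $0$ and $X=\{x_1,x_2,\dots\}$ a finite or countable set of variables. A planar rooted tree is reduced if no vertex has exactly one incoming edge. $K\{X\}_\infty$ has basis the monomials: the empty tree $1$ and all planar reduced rooted trees with leaves labelled by elements of $X$, graded by number of leaves (degree); for $k\ge2$, $\vee^k$ grafts $k$ nonempty trees (in order) onto a new root, extended multilinearly, with unit conventions (arguments $1$ omitted, $\vee^1=\mathrm{id}$, $\vee^k(1,\dots,1)=1$). $K\{X\}_\infty\otimes K\{X\}_\infty$ carries the operations componentwise, and the co-addition $\Delta_a$ is the unique unital homomorphism with $\Delta_a(x_i)=x_i\otimes1+1\otimes x_i$; $f$ is primitive if $\Delta_a(f)=f\otimes1+1\otimes f$. For a monomial $T$, the linear map $\partial_T$ is defined by $\Delta_a(f)=\sum_T T\otimes\partial_T(f)$ (sum over all monomials $T$). *)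

theory Defs
  imports Complex_Main "HOL-Library.Countable"
begin

text \<open>Planar rooted trees with leaves labelled by variables.  The empty tree
  (the unit 1) is represented by Node [].\<close>
datatype 'x tree = Leaf 'x | Node "'x tree list"

fun reduced_ne :: "'x tree \<Rightarrow> bool" where
  "reduced_ne (Leaf x) = True"
| "reduced_ne (Node ts) = (2 \<le> length ts \<and> (\<forall>t\<in>set ts. reduced_ne t))"

definition monomial :: "'x tree \<Rightarrow> bool" where
  "monomial T \<longleftrightarrow> T = Node [] \<or> reduced_ne T"

fun deg :: "'x tree \<Rightarrow> nat" where
  "deg (Leaf x) = 1"
| "deg (Node ts) = sum_list (map deg ts)"

text \<open>The grafting operation vee^k on monomials, with the unit conventions:
  arguments 1 are omitted, vee^1 = id, vee^k(1,...,1) = 1.\<close>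
definition vee :: "'x tree list \<Rightarrow> 'x tree" where
  "vee ts = (let us = filter (\<lambda>t. t \<noteq> Node []) ts in
              (case us of [] \<Rightarrow> Node [] | [t] \<Rightarrow> t | _ \<Rightarrow> Node us))"

text \<open>Co-addition on a monomial, as the list of terms A (x) B (with multiplicity):
  Delta(x) = x(x)1 + 1(x)x, Delta(1) = 1(x)1, and Delta is a homomorphism for the
  vee operations (acting componentwise, extended multilinearly).\<close>
fun cop :: "'x tree \<Rightarrow> ('x tree \<times> 'x tree) list" where
  "cop (Leaf x) = [(Leaf x, Node []), (Node [], Leaf x)]"
| "cop (Node ts) =
     map (\<lambda>ps. (vee (map fst ps), vee (map snd ps))) (product_lists (map cop ts))"

definition KX :: "('x tree \<Rightarrow> 'k::field) set" where
  "KX = {f. finite {T. f T \<noteq> 0} \<and> (\<forall>T. f T \<noteq> 0 \<longrightarrow> monomial T)}"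

definition homogeneous :: "nat \<Rightarrow> ('x tree \<Rightarrow> 'k::field) \<Rightarrow> bool" where
  "homogeneous n f \<longleftrightarrow> (\<forall>T. f T \<noteq> 0 \<longrightarrow> deg T = n)"

text \<open>Co-addition, extended linearly; an element of the tensor product is given by
  its coefficients on the basis A (x) B of pairs of monomials.\<close>
definition coadd :: "('x tree \<Rightarrow> 'k::field) \<Rightarrow> ('x tree \<times> 'x tree \<Rightarrow> 'k)" where
  "coadd f = (\<lambda>AB. \<Sum>T\<in>{T. f T \<noteq> 0}. f T * of_nat (count_list (cop T) AB))"

definition primitive :: "('x tree \<Rightarrow> 'k::field) \<Rightarrow> bool" where
  "primitive f \<longleftrightarrow> coadd f =
     (\<lambda>(A, B). (if B = Node [] then f A else 0) + (if A = Node [] then f B else 0))"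

text \<open>partial_T f, defined by Delta(f) = sum_T T (x) partial_T(f).\<close>
definition partial :: "'x tree \<Rightarrow> ('x tree \<Rightarrow> 'k::field) \<Rightarrow> ('x tree \<Rightarrow> 'k)" where
  "partial T f = (\<lambda>S. coadd f (T, S))"

end

theory Submission
  imports Defs "HOL-Library.Multiset"
begin

lemma vee_unit_iff: "vee ts = Node [] \<longleftrightarrow> (\<forall>t\<in>set ts. t = Node [])"
proof -
  define us where "us = filter (\<lambda>t. t \<noteq> Node []) ts"
  have "vee ts = (case us of [] \<Rightarrow> Node [] | [t] \<Rightarrow> t | _ \<Rightarrow> Node us)"
    unfolding vee_def us_def Let_def by simp
  moreover have "(\<forall>t\<in>set ts. t = Node []) \<longleftrightarrow> us = []"
    unfolding us_def by (auto simp: filter_empty_conv)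
  moreover have "\<forall>t\<in>set us. t \<noteq> Node []" unfolding us_def by auto
  ultimately show ?thesis
    by (cases us rule: remdups_adj.cases) auto
qed

lemma sum_deg_filter: "sum_list (map deg (filter (\<lambda>t. t \<noteq> Node []) ts)) = sum_list (map deg ts)"
  by (induction ts) auto

lemma deg_vee: "deg (vee ts) = sum_list (map deg ts)"
proof -
  define us where "us = filter (\<lambda>t. t \<noteq> Node []) ts"
  have "vee ts = (case us of [] \<Rightarrow> Node [] | [t] \<Rightarrow> t | _ \<Rightarrow> Node us)"
    unfolding vee_def us_def Let_def by simp
  moreover have "sum_list (map deg us) = sum_list (map deg ts)"
    unfolding us_def by (rule sum_deg_filter)
  ultimately show ?thesis
    by (cases us rule: remdups_adj.cases) auto
qed

lemma monomial_vee: "\<forall>t\<in>set ts. monomial t \<Longrightarrow> monomial (vee ts)"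
proof -
  assume a: "\<forall>t\<in>set ts. monomial t"
  define us where "us = filter (\<lambda>t. t \<noteq> Node []) ts"
  have "vee ts = (case us of [] \<Rightarrow> Node [] | [t] \<Rightarrow> t | _ \<Rightarrow> Node us)"
    unfolding vee_def us_def Let_def by simp
  moreover have "\<forall>t\<in>set us. reduced_ne t" using a unfolding us_def monomial_def by auto
  ultimately show ?thesis
    by (cases us rule: remdups_adj.cases) (auto simp: monomial_def)
qed

lemma vee_reduced: "2 \<le> length ts \<Longrightarrow> \<forall>t\<in>set ts. reduced_ne t \<Longrightarrow> vee ts = Node ts"
proof -
  assume a: "2 \<le> length ts" "\<forall>t\<in>set ts. reduced_ne t"
  have "filter (\<lambda>t. t \<noteq> Node []) ts = ts" using a(2)
    by (auto simp: filter_id_conv)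
  then show ?thesis using a(1) unfolding vee_def Let_def
    by (cases ts rule: remdups_adj.cases) auto
qed

lemma sum_pairs: "list_all2 (\<lambda>p t. deg (fst p) + deg (snd p) = deg t) ps ts \<Longrightarrow>
  sum_list (map deg (map fst ps)) + sum_list (map deg (map snd ps)) = sum_list (map deg ts)"
  by (induction rule: list_all2_induct) auto

lemma cop_deg: "(A, B) \<in> set (cop T) \<Longrightarrow> deg A + deg B = deg T"
proof (induction T arbitrary: A B)
  case (Leaf x) then show ?case by auto
next
  case (Node ts)
  then obtain ps where ps: "ps \<in> set (product_lists (map cop ts))"
     and AB: "A = vee (map fst ps)" "B = vee (map snd ps)" by auto
  have "list_all2 (\<lambda>x ys. x \<in> set ys) ps (map cop ts)" using ps product_lists_set by blast
  then have "list_all2 (\<lambda>p t. p \<in> set (cop t)) ps ts" by (simp add: list_all2_map2)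
  then have "list_all2 (\<lambda>p t. deg (fst p) + deg (snd p) = deg t) ps ts"
    using Node.IH by (auto simp: list_all2_conv_all_nth)
  from sum_pairs[OF this] show ?case using AB by (simp only: deg_vee deg.simps)
qed


lemma cop_monomial: "monomial T \<Longrightarrow> (A, B) \<in> set (cop T) \<Longrightarrow> monomial A \<and> monomial B"
proof (induction T arbitrary: A B)
  case (Leaf x) then show ?case by (auto simp: monomial_def)
next
  case (Node ts)
  then obtain ps where ps: "ps \<in> set (product_lists (map cop ts))"
     and AB: "A = vee (map fst ps)" "B = vee (map snd ps)" by auto
  have ch: "\<forall>t\<in>set ts. monomial t" using Node.prems(1) by (auto simp: monomial_def)
  have "list_all2 (\<lambda>x ys. x \<in> set ys) ps (map cop ts)" using ps product_lists_set by blast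
  then have "list_all2 (\<lambda>p t. p \<in> set (cop t)) ps ts" by (simp add: list_all2_map2)
  then have "\<forall>p\<in>set ps. monomial (fst p) \<and> monomial (snd p)"
  proof (intro ballI)
    fix p assume "p \<in> set ps"
    then obtain i where i: "i < length ps" "p = ps ! i" by (auto simp: in_set_conv_nth)
    assume l: "list_all2 (\<lambda>p t. p \<in> set (cop t)) ps ts"
    then have "i < length ts" "p \<in> set (cop (ts ! i))" using i by (auto simp: list_all2_conv_all_nth)
    moreover have "monomial (ts ! i)" using ch \<open>i < length ts\<close> by auto
    ultimately show "monomial (fst p) \<and> monomial (snd p)"
      using Node.IH[of "ts ! i" "fst p" "snd p"] by auto
  qed
  then show ?case using AB by (auto intro!: monomial_vee)
qed

lemma mset_concat_map: "mset (concat (map g xs)) = sum_mset (image_mset (\<lambda>x. mset (g x)) (mset xs))"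
  by (induction xs) auto

lemma mset_product_lists: "list_all2 (\<lambda>xs ys. mset xs = mset ys) xss yss \<Longrightarrow>
   mset (product_lists xss) = mset (product_lists yss)"
proof (induction rule: list_all2_induct)
  case Nil then show ?case by simp
next
  case (Cons xs ys xss yss)
  show ?case using Cons by (simp add: mset_concat_map)
qed

lemma product_lists_map: "product_lists (map (map f) xss) = map (map f) (product_lists xss)"
  by (induction xss) (auto simp: map_concat comp_def)

lemma count_list_swap: "count_list (map prod.swap xs) (B, A) = count_list xs (A, B)"
  by (induction xs) auto

lemma cop_swap: "mset (map prod.swap (cop T)) = mset (cop T)"
proof (induction T)
  case (Leaf x) then show ?case by auto
next
  case (Node ts)
  define h :: "('a tree \<times> 'a tree) list \<Rightarrow> 'a tree \<times> 'a tree" where "h = (\<lambda>ps. (vee (map fst ps), vee (map snd ps)))"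
  have "map prod.swap (cop (Node ts)) = map h (map (map prod.swap) (product_lists (map cop ts)))"
    by (simp add: h_def comp_def)
  also have "\<dots> = map h (product_lists (map (map prod.swap) (map cop ts)))"
    using product_lists_map[of prod.swap "map cop ts"] by simp
  finally have e: "map prod.swap (cop (Node ts)) = map h (product_lists (map (map prod.swap) (map cop ts)))" .
  have "list_all2 (\<lambda>xs ys. mset xs = mset ys) (map (map prod.swap) (map cop ts)) (map cop ts)"
    using Node.IH by (auto simp: list_all2_conv_all_nth)
  then have "mset (product_lists (map (map prod.swap) (map cop ts))) = mset (product_lists (map cop ts))"
    by (rule mset_product_lists)
  then show ?case unfolding e by (simp add: h_def)
qed

lemma cop_count_sym: "count_list (cop T) (A, B) = count_list (cop T) (B, A)"
proof -
  have "count_list (cop T) (B, A) = count (mset (cop T)) (B, A)" by (simp only: count_mset)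
  also have "\<dots> = count (mset (map prod.swap (cop T))) (B, A)" by (simp only: cop_swap)
  also have "\<dots> = count_list (cop T) (A, B)" by (simp only: count_mset count_list_swap)
  finally show ?thesis by simp
qed


lemma filter_product_lists:
  "filter (\<lambda>ps. \<forall>p\<in>set ps. Q p) (product_lists xss) = product_lists (map (filter Q) xss)"
proof (induction xss)
  case Nil then show ?case by simp
next
  case (Cons xs xss)
  have "\<And>x. filter (\<lambda>ps. \<forall>p\<in>set ps. Q p) (map (Cons x) (product_lists xss)) =
     (if Q x then map (Cons x) (product_lists (map (filter Q) xss)) else [])"
    using Cons by (simp add: filter_map comp_def)
  then show ?case by (induction xs) auto
qed

lemma product_lists_single: "product_lists (map (\<lambda>t. [g t]) ts) = [map g ts]"
  by (induction ts) auto

lemma reduced_ne_not_unit: "reduced_ne t \<Longrightarrow> t \<noteq> Node []"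
  by auto

lemma cop_unit_filter: "monomial T \<Longrightarrow> filter (\<lambda>p. snd p = Node []) (cop T) = [(T, Node [])]"
proof (induction T)
  case (Leaf x) then show ?case by auto
next
  case (Node ts)
  show ?case
  proof (cases "ts = []")
    case True then show ?thesis by (simp add: vee_def)
  next
    case False
    then have r: "2 \<le> length ts" "\<forall>t\<in>set ts. reduced_ne t" using Node.prems by (auto simp: monomial_def)
    have fm: "map (filter (\<lambda>p. snd p = Node [])) (map cop ts) = map (\<lambda>t. [(t, Node [])]) ts"
      using Node.IH r(2) by (auto simp: monomial_def)
    have "filter (\<lambda>p. snd p = Node []) (cop (Node ts)) =
       map (\<lambda>ps. (vee (map fst ps), vee (map snd ps)))
         (filter (\<lambda>ps. \<forall>p\<in>set ps. snd p = Node []) (product_lists (map cop ts)))"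
      by (simp add: filter_map comp_def vee_unit_iff)
    also have "\<dots> = map (\<lambda>ps. (vee (map fst ps), vee (map snd ps)))
         (product_lists (map (\<lambda>t. [(t, Node [])]) ts))"
      by (simp only: filter_product_lists fm)
    also have "\<dots> = [(vee ts, vee (map (\<lambda>_. Node []) ts))]"
      by (simp add: product_lists_single comp_def)
    also have "\<dots> = [(Node ts, Node [])]"
      using r by (simp add: vee_reduced vee_unit_iff)
    finally show ?thesis .
  qed
qed

lemma count_filter: "count_list (filter P xs) x = (if P x then count_list xs x else 0)"
  by (induction xs) auto

lemma cop_count_unit: "monomial T \<Longrightarrow> count_list (cop T) (A, Node []) = (if A = T then 1 else 0)"
proof -
  assume m: "monomial T"
  have "count_list (cop T) (A, Node []) = count_list (filter (\<lambda>p. snd p = Node []) (cop T)) (A, Node [])"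
    by (simp add: count_filter)
  then show ?thesis using cop_unit_filter[OF m] by simp
qed

lemma reduced_deg: "reduced_ne T \<Longrightarrow> 1 \<le> deg T"
proof (induction T)
  case (Leaf x) then show ?case by simp
next
  case (Node ts)
  then obtain t where "t \<in> set ts" by (cases ts) auto
  then have "1 \<le> deg t" "deg t \<le> sum_list (map deg ts)" using Node by (auto simp: member_le_sum_list)
  then show ?case by simp
qed


theorem lemma4p3p10:
  fixes f :: "'x::countable tree \<Rightarrow> 'k::field_char_0" and n :: nat
  assumes "f \<in> KX" and "homogeneous n f" and "1 \<le> n"
  shows "primitive f \<longleftrightarrow>
    (\<forall>T. monomial T \<and> 1 \<le> deg T \<and> real (deg T) < (real n + 1) / 2 \<longrightarrow> partial T f = (\<lambda>_. 0))"
proof -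
  define S where "S = {T. f T \<noteq> 0}"
  have finS: "finite S" and monS: "\<And>T. T \<in> S \<Longrightarrow> monomial T"
    using assms(1) unfolding KX_def S_def by auto
  have degS: "\<And>T. T \<in> S \<Longrightarrow> deg T = n" using assms(2) unfolding homogeneous_def S_def by auto
  have fz: "\<And>T. T \<notin> S \<Longrightarrow> f T = 0" unfolding S_def by auto
  have cf: "\<And>AB. coadd f AB = (\<Sum>T\<in>S. f T * of_nat (count_list (cop T) AB))"
    unfolding coadd_def S_def by simp
  have f1: "f (Node []) = 0"
  proof (rule fz)
    show "Node [] \<notin> S" using degS assms(3) by force
  qed
  have unitR: "coadd f (A, Node []) = f A" for A
  proof -
    have "coadd f (A, Node []) = (\<Sum>T\<in>S. if T = A then f T else 0)"
      unfolding cf by (intro sum.cong) (auto simp: cop_count_unit monS)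
    also have "\<dots> = f A" using fz finS by (simp add: sum.delta')
    finally show ?thesis .
  qed
  have sym: "coadd f (A, B) = coadd f (B, A)" for A B
    unfolding cf by (simp add: cop_count_sym[of _ A B])
  have zero: "coadd f (A, B) = 0" if "\<not> (monomial A \<and> monomial B \<and> deg A + deg B = n)" for A B
    unfolding cf
  proof (intro sum.neutral ballI)
    fix T assume T: "T \<in> S"
    have "(A, B) \<notin> set (cop T)"
      using that cop_deg cop_monomial monS[OF T] degS[OF T] by blast
    then show "f T * of_nat (count_list (cop T) (A, B)) = 0" by (simp add: count_list_0_iff)
  qed
  have posdeg: "monomial A \<Longrightarrow> A \<noteq> Node [] \<Longrightarrow> 1 \<le> deg A" for A :: "'x tree"
    using reduced_deg[of A] by (auto simp: monomial_def)
  show ?thesis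
  proof
    assume p: "primitive f"
    show "\<forall>T. monomial T \<and> 1 \<le> deg T \<and> real (deg T) < (real n + 1) / 2 \<longrightarrow> partial T f = (\<lambda>_. 0)"
    proof (intro allI impI ext)
      fix T S' :: "'x tree" assume h: "monomial T \<and> 1 \<le> deg T \<and> real (deg T) < (real n + 1) / 2"
      then have "T \<noteq> Node []" by auto
      moreover have "deg T \<noteq> n" using h assms(3) by auto
      then have "f T = 0" using degS fz by blast
      ultimately show "partial T f S' = 0"
        using p unfolding partial_def primitive_def by simp
    qed
  next
    assume h: "\<forall>T. monomial T \<and> 1 \<le> deg T \<and> real (deg T) < (real n + 1) / 2 \<longrightarrow> partial T f = (\<lambda>_. 0)"
    have mid: "coadd f (A, B) = 0" if "A \<noteq> Node []" "B \<noteq> Node []" for A B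
    proof (cases "monomial A \<and> monomial B \<and> deg A + deg B = n")
      case False then show ?thesis by (rule zero)
    next
      case True
      then have d: "1 \<le> deg A" "1 \<le> deg B" using posdeg that by auto
      show ?thesis
      proof (cases "real (deg A) < (real n + 1) / 2")
        case True
        then have "partial A f = (\<lambda>_. 0)" using h d \<open>monomial A \<and> monomial B \<and> deg A + deg B = n\<close> by blast
        then show ?thesis unfolding partial_def by meson
      next
        case False
        have "real (deg A) + real (deg B) = real n" using \<open>monomial A \<and> monomial B \<and> deg A + deg B = n\<close>
          by (metis of_nat_add)
        then have "real (deg B) < (real n + 1) / 2" using False by (simp add: field_simps)
        then have "partial B f = (\<lambda>_. 0)" using h d \<open>monomial A \<and> monomial B \<and> deg A + deg B = n\<close> by blast
        then show ?thesis unfolding partial_def using sym by metis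
      qed
    qed
    show "primitive f" unfolding primitive_def
    proof (intro ext, clarify)
      fix A B :: "'x tree"
      show "coadd f (A, B) = (if B = Node [] then f A else 0) + (if A = Node [] then f B else 0)"
        using unitR[of A] unitR[of B] sym[of A B] mid[of A B] f1 by auto
    qed
  qed
qed

end
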